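(* Consider the robot rendezvous system $$\dot{x}_k(t)=x_{k-1}(t)-x_k(t),\quad k\in\mathbb{Z},\ t\ge0,$$ with a good initial constellation $x_0=(x_k(0))_{k\in\mathbb{Z}}\in\ell^\infty(\mathbb{Z})$. Suppose there is $c\in\mathbb{C}$ such that $$\sup_{k\in\mathbb{Z}}\bigg|\frac{1}{n}\sum_{j=1}^n x_{k-j}(0)-c\bigg|=O(n^{-1})\quad\text{as } n\to\infty.$$ Then $\sup_{k\in\mathbb{Z}}|x_k(t)-c|=O(t^{-1/2})$ as $t\to\infty$.
   Context: $\ell^\infty(\mathbb{Z})$ is the Banach space of bounded doubly infinite complex sequences with the supremum norm. $S$ denotes the right-shift operator on $\ell^\infty(\mathbb{Z})$, $S(x_k)=(x_{k-1})$. For $x_0\in\ell^\infty(\mathbb{Z})$, the solution of the system is $x(t)=(x_k(t))_{k\in\mathbb{Z}}=\exp(t(S-I))x_0$, $t\ge0$. An initial constellation $x_0\in\ell^\infty(\mathbb{Z})$ is called good if there exist constants $c_k\in\mathbb{C}$, $k\in\mathbb{Z}$, such that the corresponding solution satisfies $\sup_{k\in\mathbb{Z}}|x_k(t)-c_k|\to0$ as $t\to\infty$. For nonnegative functions, $a(t)=O(b(t))$ as $t\to\infty$ means there is $C>0$ with $a(t)\le Cb(t)$ for all sufficiently large $t$; similarly for sequences. *)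

theory Defs
  imports "HOL-Analysis.Analysis" "HOL-Library.Landau_Symbols"
begin

text \<open>The Banach space l-infinity over the integers: bounded (automatically continuous,
  as int carries the discrete topology) complex sequences, with the sup norm.\<close>
type_synonym linf = "int \<Rightarrow>\<^sub>C complex"

definition shiftR :: "linf \<Rightarrow>\<^sub>L linf" where
  "shiftR = Blinfun (\<lambda>f. Bcontfun (\<lambda>k. apply_bcontfun f (k - 1)))"

definition op_pow :: "linf \<Rightarrow>\<^sub>L linf \<Rightarrow> nat \<Rightarrow> linf \<Rightarrow>\<^sub>L linf" where
  "op_pow A n = ((\<lambda>B. A o\<^sub>L B) ^^ n) id_blinfun"

definition op_exp :: "linf \<Rightarrow>\<^sub>L linf \<Rightarrow> linf \<Rightarrow>\<^sub>L linf" where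
  "op_exp A = (\<Sum>n. (1 / fact n) *\<^sub>R op_pow A n)"

definition rsol :: "real \<Rightarrow> linf \<Rightarrow> linf" where
  "rsol t x0 = blinfun_apply (op_exp (t *\<^sub>R (shiftR - id_blinfun))) x0"

definition good :: "linf \<Rightarrow> bool" where
  "good x0 \<longleftrightarrow> (\<exists>c :: int \<Rightarrow> complex. \<forall>\<epsilon>>0. eventually
      (\<lambda>t. \<forall>k. cmod (apply_bcontfun (rsol t x0) k - c k) \<le> \<epsilon>) at_top)"

end

theory Submission
  imports Defs
begin

instantiation int :: metric_space
begin
definition dist_int :: "int \<Rightarrow> int \<Rightarrow> real" where "dist_int x y = real_of_int \<bar>x - y\<bar>"
definition uniformity_int :: "(int \<times> int) filter" where
  "uniformity_int = (INF e\<in>{0<..}. principal {(x, y). dist x y < e})"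
instance
proof
  fix U :: "int set"
  have eqb: "b = x" if "\<bar>real_of_int x - real_of_int b\<bar> * 2 < 1" for x b :: int
  proof -
    have "real_of_int \<bar>x - b\<bar> < 1" using that by simp
    then have "\<bar>x - b\<bar> < 1" by linarith
    then show ?thesis by arith
  qed
  have "eventually (\<lambda>(x', y). x' = x \<longrightarrow> y \<in> U) uniformity" if "x \<in> U" for x
    unfolding uniformity_int_def
    by (rule eventually_INF1[where i="1/2"]) (auto simp: eventually_principal dist_int_def that dest: eqb)
  then show "open U \<longleftrightarrow> (\<forall>x\<in>U. eventually (\<lambda>(x', y). x' = x \<longrightarrow> y \<in> U) uniformity)"
    by (simp add: open_discrete)
qed (auto simp: dist_int_def uniformity_int_def)
end
instance bcontfun :: (metric_space, banach) banach ..

lemma shift_bcontfun: "(\<lambda>k. apply_bcontfun (f::linf) (k - 1)) \<in> bcontfun"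
  by (rule bcontfun_normI[where b="norm f"]) (auto intro: norm_bounded)

lemma shift_apply_eq:
  "apply_bcontfun (Bcontfun (\<lambda>k. apply_bcontfun (f::linf) (k - 1))) k = apply_bcontfun f (k - 1)"
  using shift_bcontfun by (simp add: Bcontfun_inverse)

lemma bl_shift: "bounded_linear (\<lambda>f::linf. Bcontfun (\<lambda>k. apply_bcontfun f (k - 1)))"
proof (rule bounded_linear_intro[where K=1])
  fix x y :: linf
  show "Bcontfun (\<lambda>k. apply_bcontfun (x + y) (k - 1)) =
    Bcontfun (\<lambda>k. apply_bcontfun x (k - 1)) + Bcontfun (\<lambda>k. apply_bcontfun y (k - 1))"
    by (rule bcontfun_eqI) (subst shift_apply_eq, simp add: shift_apply_eq)
next
  fix r :: real and x :: linf
  show "Bcontfun (\<lambda>k. apply_bcontfun (r *\<^sub>R x) (k - 1)) = r *\<^sub>R Bcontfun (\<lambda>k. apply_bcontfun x (k - 1))"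
    by (rule bcontfun_eqI) (subst shift_apply_eq, simp add: shift_apply_eq)
next
  fix x :: linf
  show "norm (Bcontfun (\<lambda>k. apply_bcontfun x (k - 1))) \<le> norm x * 1"
    by (auto intro!: norm_bound simp: shift_apply_eq norm_bounded)
qed

lemma shiftR_apply: "apply_bcontfun (blinfun_apply shiftR f) k = apply_bcontfun f (k - 1)"
  unfolding shiftR_def using bl_shift by (simp add: bounded_linear_Blinfun_apply shift_apply_eq)

lemma bl_eval: "bounded_linear (\<lambda>f::linf. apply_bcontfun f k)"
  by (rule bounded_linear_intro[where K=1]) (auto simp: norm_bounded)

lemma pascal_aux:
  fixes g :: "int \<Rightarrow> complex"
  shows "(\<Sum>m\<le>Suc n. of_nat (Suc n choose m) * (-1)^(Suc n - m) * g (k - int m)) =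
    (\<Sum>m\<le>n. of_nat (n choose m) * (-1)^(n-m) * g (k - 1 - int m)) -
    (\<Sum>m\<le>n. of_nat (n choose m) * (-1)^(n-m) * g (k - int m))"
proof -
  have e1: "(\<Sum>m\<le>Suc n. of_nat (Suc n choose m) * (-1)^(Suc n - m) * g (k - int m)) =
     (-1)^(Suc n) * g k + (\<Sum>m\<le>n. of_nat (Suc n choose Suc m) * (-1)^(n - m) * g (k - int (Suc m)))"
    by (subst sum.atMost_Suc_shift) simp
  have e2: "(\<Sum>m\<le>n. of_nat (Suc n choose Suc m) * (-1)^(n - m) * g (k - int (Suc m))) =
     (\<Sum>m\<le>n. of_nat (n choose m) * (-1)^(n-m) * g (k - 1 - int m)) +
     (\<Sum>m\<le>n. of_nat (n choose Suc m) * (-1)^(n - m) * g (k - int (Suc m)))"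
    by (simp add: sum.distrib[symmetric] algebra_simps)
  have e3: "(\<Sum>m\<le>n. of_nat (n choose Suc m) * (-1)^(n - m) * g (k - int (Suc m))) =
     (\<Sum>m<n. of_nat (n choose Suc m) * (-1)^(n - m) * (g (k - int (Suc m)) :: complex))"
    by (simp add: lessThan_Suc_atMost[symmetric])
  have e4: "(\<Sum>m\<le>n. of_nat (n choose m) * (-1)^(n-m) * g (k - int m)) =
     (-1)^n * g k + (\<Sum>m<n. of_nat (n choose Suc m) * (-1)^(n - Suc m) * g (k - int (Suc m)))"
    by (subst lessThan_Suc_atMost[symmetric], subst sum.lessThan_Suc_shift) simp
  have e5: "(\<Sum>m<n. of_nat (n choose Suc m) * (-1)^(n - m) * (g (k - int (Suc m)) :: complex)) =
     - (\<Sum>m<n. of_nat (n choose Suc m) * (-1)^(n - Suc m) * g (k - int (Suc m)))"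
  proof -
    have "\<And>m. m < n \<Longrightarrow> ((-1)^(n - m) :: complex) = - ((-1)^(n - Suc m))"
      by (metis Suc_diff_Suc mult_minus1 power_Suc)
    then show ?thesis by (simp add: sum_negf[symmetric])
  qed
  show ?thesis using e1 e2 e3 e4 e5 by simp
qed

definition Aop :: "real \<Rightarrow> linf \<Rightarrow>\<^sub>L linf" where
  "Aop t = t *\<^sub>R (shiftR - id_blinfun)"

lemma Aop_apply: "apply_bcontfun (blinfun_apply (Aop t) x) k =
   of_real t * (apply_bcontfun x (k - 1) - apply_bcontfun x k)"
  by (simp add: Aop_def shiftR_apply blinfun.scaleR_left scaleR_conv_of_real blinfun.diff_left)

lemma pow_apply: "apply_bcontfun (blinfun_apply (op_pow (Aop t) n) x) k =
   of_real (t^n) * (\<Sum>m\<le>n. of_nat (n choose m) * (-1)^(n-m) * apply_bcontfun x (k - int m))"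
proof (induction n arbitrary: k)
  case 0
  then show ?case by (simp add: op_pow_def)
next
  case (Suc n)
  have "op_pow (Aop t) (Suc n) = Aop t o\<^sub>L op_pow (Aop t) n"
    by (simp add: op_pow_def)
  then have "apply_bcontfun (blinfun_apply (op_pow (Aop t) (Suc n)) x) k =
     of_real t * (apply_bcontfun (blinfun_apply (op_pow (Aop t) n) x) (k - 1) -
        apply_bcontfun (blinfun_apply (op_pow (Aop t) n) x) k)"
    by (simp add: Aop_apply)
  also have "\<dots> = of_real (t^Suc n) * (\<Sum>m\<le>Suc n. of_nat (Suc n choose m) * (-1)^(Suc n-m) * apply_bcontfun x (k - int m))"
    unfolding Suc pascal_aux by (simp add: algebra_simps)
  finally show ?case .
qed


lemma norm_op_pow: "norm (op_pow A n) \<le> norm A ^ n"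
proof (induction n)
  case 0
  then show ?case by (simp add: op_pow_def norm_blinfun_id_le)
next
  case (Suc n)
  have "norm (op_pow A (Suc n)) = norm (A o\<^sub>L op_pow A n)" by (simp add: op_pow_def)
  also have "\<dots> \<le> norm A * norm (op_pow A n)" by (rule norm_blinfun_compose)
  also have "\<dots> \<le> norm A * norm A ^ n" using Suc by (simp add: mult_left_mono)
  finally show ?case by simp
qed

lemma summable_op_exp: "summable (\<lambda>n. (1 / fact n) *\<^sub>R op_pow A n)"
proof (rule summable_comparison_test')
  show "summable (\<lambda>n. norm A ^ n / fact n)"
    using summable_exp_generic[of "norm A"] by (simp add: divide_inverse mult.commute)
  fix n :: nat
  show "norm ((1 / fact n) *\<^sub>R op_pow A n) \<le> norm A ^ n / fact n"
    using norm_op_pow[of A n] by (simp add: divide_right_mono)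
qed

lemma rsol_series: "(\<lambda>n. of_real (1 / fact n) * apply_bcontfun (blinfun_apply (op_pow (Aop t) n) x) k)
    sums apply_bcontfun (rsol t x) k"
proof -
  have bl: "bounded_linear (\<lambda>B::linf \<Rightarrow>\<^sub>L linf. apply_bcontfun (blinfun_apply B x) k)"
    using bounded_linear_compose[OF bl_eval[of k] bounded_linear_apply_blinfun[of x]] by simp
  have "(\<lambda>n. (1 / fact n) *\<^sub>R op_pow (Aop t) n) sums op_exp (Aop t)"
    unfolding op_exp_def by (rule summable_sums[OF summable_op_exp])
  from bounded_linear.sums[OF bl this]
  show ?thesis
    by (simp add: rsol_def Aop_def blinfun.scaleR_left scaleR_conv_of_real)
qed


lemma coef_real:
  assumes "i \<le> n"
  shows "t^i / fact i * ((-t)^(n-i) / fact (n-i)) = 1 / fact n * t^n * real (n choose i) * (-1)^(n-i)"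
proof -
  have tn: "t^n = t^i * t^(n-i)" using assms by (metis le_add_diff_inverse power_add)
  have m: "(-t)^(n-i) = (-1)^(n-i) * t^(n-i)" by (rule power_minus)
  have c: "real (n choose i) = fact n / (fact i * fact (n-i))" by (rule binomial_fact[OF assms])
  have F: "(fact n :: real) \<noteq> 0" "(fact i :: real) \<noteq> 0" "(fact (n-i) :: real) \<noteq> 0" by simp_all
  have gen: "\<And>F A B a b s :: real. F \<noteq> 0 \<Longrightarrow> A \<noteq> 0 \<Longrightarrow> B \<noteq> 0 \<Longrightarrow>
     a / A * (s * b / B) = 1 / F * (a * b) * (F / (A * B)) * s"
    by (simp add: field_simps)
  show ?thesis unfolding m tn c by (rule gen[OF F])
qed

lemma coef_cplx:
  assumes "i \<le> n"
  shows "complex_of_real (t^i / fact i) * complex_of_real ((-t)^(n-i) / fact (n-i)) =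
    complex_of_real (1 / fact n) * complex_of_real (t^n) * of_nat (n choose i) * (-1)^(n-i)"
proof -
  have "complex_of_real (t^i / fact i) * complex_of_real ((-t)^(n-i) / fact (n-i)) =
      complex_of_real (1 / fact n * t^n * real (n choose i) * (-1)^(n-i))"
    by (simp only: of_real_mult[symmetric] coef_real[OF assms])
  then show ?thesis by simp
qed

lemma rsol_sums: "(\<lambda>m. complex_of_real (exp (-t) * t^m / fact m) * apply_bcontfun x (k - int m))
    sums apply_bcontfun (rsol t x) k"
proof -
  define a where "a m = complex_of_real (t^m / fact m) * apply_bcontfun x (k - int m)" for m
  define b where "b j = complex_of_real ((-t)^j / fact j)" for j
  have na: "summable (\<lambda>m. norm (a m))"
  proof (rule summable_comparison_test')
    show "summable (\<lambda>m. \<bar>t\<bar>^m / fact m * norm x)"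
      using summable_exp_generic[of "\<bar>t\<bar>"]
      by (intro summable_mult2) (simp add: divide_inverse mult.commute)
    fix m :: nat
    show "norm (norm (a m)) \<le> \<bar>t\<bar>^m / fact m * norm x"
    proof -
      have "norm (norm (a m)) = \<bar>t\<bar>^m / fact m * cmod (apply_bcontfun x (k - int m))"
        unfolding a_def by (simp add: norm_mult norm_divide norm_power)
      also have "\<dots> \<le> \<bar>t\<bar>^m / fact m * norm x"
        by (rule mult_left_mono[OF norm_bounded]) simp
      finally show ?thesis .
    qed
  qed
  have nbe: "(\<lambda>m. norm (b m)) = (\<lambda>m. \<bar>t\<bar>^m / fact m)"
    by (rule ext, simp only: b_def norm_of_real, simp add: power_abs)
  have nb: "summable (\<lambda>m. norm (b m))"
    unfolding nbe using summable_exp_generic[of "\<bar>t\<bar>"]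
    by (simp add: divide_inverse mult.commute)
  have sb: "b sums complex_of_real (exp (-t))"
  proof -
    have 1: "(\<lambda>j. complex_of_real ((-t)^j /\<^sub>R fact j)) sums complex_of_real (exp (-t))"
      by (rule sums_of_real[OF exp_converges])
    have 2: "\<And>j. ((-t)^j /\<^sub>R fact j) = (-t)^j / fact j"
      by (simp add: divide_inverse mult.commute)
    show ?thesis using 1 unfolding 2 b_def .
  qed
  have cp: "(\<lambda>n. \<Sum>i\<le>n. a i * b (n - i)) sums (suminf a * suminf b)"
    by (rule Cauchy_product_sums[OF na nb])
  have feq: "(\<lambda>n. \<Sum>i\<le>n. a i * b (n - i)) = (\<lambda>n. of_real (1 / fact n) * apply_bcontfun (blinfun_apply (op_pow (Aop t) n) x) k)"
  proof
    fix n
    have "(\<Sum>i\<le>n. a i * b (n - i)) = (\<Sum>i\<le>n. complex_of_real (1 / fact n) * complex_of_real (t^n) * (of_nat (n choose i) * (-1)^(n-i) * apply_bcontfun x (k - int i)))"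
    proof (rule sum.cong)
      fix i assume "i \<in> {..n}"
      then have "i \<le> n" by simp
      then show "a i * b (n - i) = complex_of_real (1 / fact n) * complex_of_real (t^n) * (of_nat (n choose i) * (-1)^(n-i) * apply_bcontfun x (k - int i))"
      proof -
        have "a i * b (n - i) = (complex_of_real (t^i / fact i) * complex_of_real ((-t)^(n-i) / fact (n-i))) * apply_bcontfun x (k - int i)"
          unfolding a_def b_def by (simp only: ac_simps)
        also have "\<dots> = complex_of_real (1 / fact n) * complex_of_real (t^n) * (of_nat (n choose i) * (-1)^(n-i) * apply_bcontfun x (k - int i))"
          by (simp only: coef_cplx[OF \<open>i \<le> n\<close>] ac_simps)
        finally show ?thesis .
      qed
    qed simp
    also have "\<dots> = of_real (1 / fact n) * apply_bcontfun (blinfun_apply (op_pow (Aop t) n) x) k"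
      by (simp add: pow_apply sum_distrib_left mult.assoc)
    finally show "(\<Sum>i\<le>n. a i * b (n - i)) = of_real (1 / fact n) * apply_bcontfun (blinfun_apply (op_pow (Aop t) n) x) k" .
  qed
  have cp2: "(\<lambda>n. of_real (1 / fact n) * apply_bcontfun (blinfun_apply (op_pow (Aop t) n) x) k) sums (suminf a * suminf b)"
    using cp unfolding feq .
  have eq0: "apply_bcontfun (rsol t x) k = suminf a * suminf b"
    by (rule sums_unique2[OF rsol_series cp2])
  have "suminf b = complex_of_real (exp (-t))" using sb by (rule sums_unique[symmetric])
  with eq0 have eq: "apply_bcontfun (rsol t x) k = suminf a * complex_of_real (exp (-t))" by simp
  have "(\<lambda>m. a m * complex_of_real (exp (-t))) sums (suminf a * complex_of_real (exp (-t)))"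
    by (rule sums_mult2[OF summable_sums[OF summable_norm_cancel[OF na]]])
  moreover have "(\<lambda>m. a m * complex_of_real (exp (-t))) = (\<lambda>m. complex_of_real (exp (-t) * t^m / fact m) * apply_bcontfun x (k - int m))"
  proof
    fix m
    have "exp (-t) * t^m / fact m = (t^m / fact m) * exp (-t)" by simp
    then show "a m * complex_of_real (exp (-t)) = complex_of_real (exp (-t) * t^m / fact m) * apply_bcontfun x (k - int m)"
      unfolding a_def by (simp only: of_real_mult ac_simps)
  qed
  ultimately show ?thesis unfolding eq by (simp only:)
qed


definition pois :: "real \<Rightarrow> nat \<Rightarrow> real" where
  "pois t m = exp (-t) * t^m / fact m"

lemma pois_nonneg: "t \<ge> 0 \<Longrightarrow> pois t m \<ge> 0"
  by (simp add: pois_def)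

lemma pois_Suc: "pois t (Suc m) * real (Suc m) = t * pois t m"
proof -
  have "pois t (Suc m) * real (Suc m) = exp (-t) * (t * t^m) / (real (Suc m) * fact m) * real (Suc m)"
    by (simp add: pois_def)
  also have "\<dots> = t * pois t m"
    unfolding pois_def by (simp del: of_nat_Suc)
  finally show ?thesis .
qed

lemma e0:
  fixes t :: real
  shows "(\<lambda>m. t^m / fact m) sums exp t"
proof -
  have 2: "\<And>j. (t^j /\<^sub>R fact j) = t^j / fact j"
    by (simp add: divide_inverse mult.commute)
  show ?thesis using exp_converges[of t] unfolding 2 .
qed

lemma e_Suc:
  fixes t :: real
  shows "real (Suc m) * (t^Suc m / fact (Suc m)) = t * (t^m / fact m)"
proof -
  have "real (Suc m) * (t^Suc m / fact (Suc m)) = real (Suc m) * (t * t^m) / (real (Suc m) * fact m)"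
    by simp
  also have "\<dots> = t * (t^m / fact m)" by (simp del: of_nat_Suc)
  finally show ?thesis .
qed

lemma e1:
  fixes t :: real
  shows "(\<lambda>m. real m * (t^m / fact m)) sums (t * exp t)"
proof -
  have "(\<lambda>m. real (Suc m) * (t^Suc m / fact (Suc m))) sums (t * exp t)"
    unfolding e_Suc by (rule sums_mult[OF e0])
  then show ?thesis by (subst (asm) sums_Suc_iff) simp
qed

lemma e2:
  fixes t :: real
  shows "(\<lambda>m. real m * (real m - 1) * (t^m / fact m)) sums (t * (t * exp t))"
proof -
  have eq: "\<And>m. real (Suc m) * (real (Suc m) - 1) * (t^Suc m / fact (Suc m)) = t * (real m * (t^m / fact m))"
  proof -
    fix m
    have "real (Suc m) * (real (Suc m) - 1) * (t^Suc m / fact (Suc m)) = real m * (real (Suc m) * (t^Suc m / fact (Suc m)))"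
      by simp
    also have "\<dots> = t * (real m * (t^m / fact m))" unfolding e_Suc by simp
    finally show "real (Suc m) * (real (Suc m) - 1) * (t^Suc m / fact (Suc m)) = t * (real m * (t^m / fact m))" .
  qed
  have "(\<lambda>m. real (Suc m) * (real (Suc m) - 1) * (t^Suc m / fact (Suc m))) sums (t * (t * exp t))"
    unfolding eq by (rule sums_mult[OF e1])
  then show ?thesis by (subst (asm) sums_Suc_iff) simp
qed

lemma pois_sums1: "(\<lambda>m. pois t m) sums 1"
proof -
  have "(\<lambda>m. exp (-t) * (t^m / fact m)) sums (exp (-t) * exp t)" by (rule sums_mult[OF e0])
  moreover have "exp (-t) * exp t = 1" by (simp flip: exp_add)
  ultimately show ?thesis by (simp add: pois_def mult.assoc)
qed

lemma pois_var: "(\<lambda>m. pois t m * (real m - t)^2) sums t"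
proof -
  let ?e = "\<lambda>m. t^m / fact m"
  have s: "(\<lambda>m. real m * (real m - 1) * ?e m + real m * ?e m - 2 * t * (real m * ?e m) + t^2 * ?e m)
     sums (t * (t * exp t) + t * exp t - 2 * t * (t * exp t) + t^2 * exp t)"
    by (intro sums_add sums_diff sums_mult e0 e1 e2)
  have "(\<lambda>m. exp (-t) * (real m * (real m - 1) * ?e m + real m * ?e m - 2 * t * (real m * ?e m) + t^2 * ?e m))
     sums (exp (-t) * (t * (t * exp t) + t * exp t - 2 * t * (t * exp t) + t^2 * exp t))"
    by (rule sums_mult[OF s])
  moreover have "exp (-t) * (t * (t * exp t) + t * exp t - 2 * t * (t * exp t) + t^2 * exp t) = t"
  proof -
    have "exp (-t) * exp t = 1" by (simp flip: exp_add)
    then show ?thesis by (simp add: algebra_simps power2_eq_square)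
  qed
  moreover have "\<And>m. exp (-t) * (real m * (real m - 1) * ?e m + real m * ?e m - 2 * t * (real m * ?e m) + t^2 * ?e m)
     = pois t m * (real m - t)^2"
    by (simp add: pois_def algebra_simps power2_eq_square add_divide_distrib)
  ultimately show ?thesis by simp
qed


lemma amgm_aux:
  fixes u s :: real
  shows "2 * s * \<bar>u\<bar> \<le> u^2 + s^2"
proof -
  have "0 \<le> (\<bar>u\<bar> - s)^2" by simp
  also have "\<dots> = u^2 - 2 * s * \<bar>u\<bar> + s^2" by (simp add: power2_diff algebra_simps)
  finally show ?thesis by simp
qed

lemma pois_step_bound:
  assumes t: "t > 0"
  shows "\<bar>pois t m - pois t (Suc m)\<bar> \<le>
     pois t (Suc m) * ((real (Suc m) - t)^2 + t) / (2 * t * sqrt t)"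
proof -
  define P where "P = pois t (Suc m)"
  define u where "u = real (Suc m) - t"
  have P0: "P \<ge> 0" unfolding P_def using t by (simp add: pois_nonneg)
  have pm: "pois t m = P * real (Suc m) / t"
    using pois_Suc[of t m] t unfolding P_def by (simp add: field_simps)
  have d: "pois t m - P = P * u / t"
    unfolding pm u_def using t by (simp add: field_simps)
  have st: "sqrt t > 0" "(sqrt t)^2 = t" using t by simp_all
  have a: "2 * sqrt t * \<bar>u\<bar> \<le> u^2 + t" using amgm_aux[of "sqrt t" u] st by simp
  have "\<bar>pois t m - P\<bar> = P * \<bar>u\<bar> / t" unfolding d using t P0 by (simp add: abs_mult)
  also have "\<dots> = P * (2 * sqrt t * \<bar>u\<bar>) / (2 * t * sqrt t)" using st t by (simp add: field_simps)
  also have "\<dots> \<le> P * (u^2 + t) / (2 * t * sqrt t)"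
    using a P0 st t by (intro divide_right_mono mult_left_mono) simp_all
  finally show ?thesis unfolding P_def u_def .
qed

lemma pois_tv:
  assumes t: "t > 0"
  shows "summable (\<lambda>m. \<bar>pois t m - pois t (Suc m)\<bar>)"
    and "(\<Sum>m. \<bar>pois t m - pois t (Suc m)\<bar>) \<le> 1 / sqrt t"
proof -
  define q where "q j = pois t j * ((real j - t)^2 + t)" for j
  have "(\<lambda>j. pois t j * (real j - t)^2 + t * pois t j) sums (t + t * 1)"
    by (intro sums_add sums_mult pois_var pois_sums1)
  then have sq: "q sums (2 * t)" unfolding q_def by (simp add: algebra_simps)
  have "(\<lambda>m. q (Suc m)) sums (2 * t - q 0)"
    using sq by (subst sums_Suc_iff) simp
  then have sg: "(\<lambda>m. q (Suc m) / (2 * t * sqrt t)) sums ((2 * t - q 0) / (2 * t * sqrt t))"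
    by (rule sums_divide)
  have le: "\<And>m. norm \<bar>pois t m - pois t (Suc m)\<bar> \<le> q (Suc m) / (2 * t * sqrt t)"
    unfolding q_def using pois_step_bound[OF t] by simp
  show sm: "summable (\<lambda>m. \<bar>pois t m - pois t (Suc m)\<bar>)"
    by (rule summable_comparison_test'[OF sums_summable[OF sg] le])
  have "(\<Sum>m. \<bar>pois t m - pois t (Suc m)\<bar>) \<le> (\<Sum>m. q (Suc m) / (2 * t * sqrt t))"
    using le by (intro suminf_le sm sums_summable[OF sg]) simp
  also have "\<dots> = (2 * t - q 0) / (2 * t * sqrt t)" using sg by (rule sums_unique[symmetric])
  also have "\<dots> \<le> (2 * t) / (2 * t * sqrt t)"
    using t by (intro divide_right_mono) (simp_all add: q_def pois_nonneg)
  also have "\<dots> = 1 / sqrt t" using t by simp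
  finally show "(\<Sum>m. \<bar>pois t m - pois t (Suc m)\<bar>) \<le> 1 / sqrt t" .
qed


lemma psum_small:
  fixes x0 :: linf and c :: complex
  shows "cmod (\<Sum>j=1..n. (apply_bcontfun x0 (k - int j) - c)) \<le> real n * (norm x0 + cmod c)"
proof -
  have "cmod (\<Sum>j=1..n. (apply_bcontfun x0 (k - int j) - c)) \<le> (\<Sum>j=1..n. cmod (apply_bcontfun x0 (k - int j) - c))"
    by (rule norm_sum)
  also have "\<dots> \<le> (\<Sum>j=1..n. norm x0 + cmod c)"
  proof (rule sum_mono)
    fix j
    show "cmod (apply_bcontfun x0 (k - int j) - c) \<le> norm x0 + cmod c"
      using norm_triangle_ineq4[of "apply_bcontfun x0 (k - int j)" c] norm_bounded[of x0 "k - int j"] by linarith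
  qed
  also have "\<dots> = real n * (norm x0 + cmod c)" by simp
  finally show ?thesis .
qed

lemma psum_bound:
  fixes x0 :: linf and c :: complex
  assumes h: "(\<lambda>n::nat. SUP k. cmod ((1 / of_nat n) * (\<Sum>j=1..n. apply_bcontfun x0 (k - int j)) - c))
           \<in> O(\<lambda>n. 1 / real n)"
  obtains B where "\<And>k n. cmod (\<Sum>j=1..n. (apply_bcontfun x0 (k - int j) - c)) \<le> B"
proof -
  define M where "M = norm x0 + cmod c"
  obtain C where C: "C > 0" and ev: "eventually (\<lambda>n. norm (SUP k. cmod ((1 / of_nat n) * (\<Sum>j=1..n. apply_bcontfun x0 (k - int j)) - c)) \<le> C * norm (1 / real n)) sequentially"
    using landau_o.bigE[OF h] by blast
  then obtain N where N: "\<And>n. n \<ge> N \<Longrightarrow> norm (SUP k. cmod ((1 / of_nat n) * (\<Sum>j=1..n. apply_bcontfun x0 (k - int j)) - c)) \<le> C * norm (1 / real n)"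
    by (auto simp: eventually_sequentially)
  have M0: "M \<ge> 0" by (simp add: M_def)
  have bnd: "cmod (\<Sum>j=1..n. (apply_bcontfun x0 (k - int j) - c)) \<le> C + real (Suc N) * M" for k n
  proof (cases "n \<ge> Suc N")
    case False
    then have "cmod (\<Sum>j=1..n. (apply_bcontfun x0 (k - int j) - c)) \<le> real n * M"
      using psum_small unfolding M_def by blast
    also have "\<dots> \<le> real (Suc N) * M" using False M0 by (intro mult_right_mono) simp_all
    finally show ?thesis using C by simp
  next
    case True
    then have n0: "n > 0" "n \<ge> N" by auto
    define a where "a k' = cmod ((1 / of_nat n) * (\<Sum>j=1..n. apply_bcontfun x0 (k' - int j)) - c)" for k'
    have abnd: "a k' \<le> M" for k'
    proof -
      have "cmod (\<Sum>j=1..n. apply_bcontfun x0 (k' - int j)) \<le> (\<Sum>j=1..n. cmod (apply_bcontfun x0 (k' - int j)))"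
        by (rule norm_sum)
      also have "\<dots> \<le> (\<Sum>j=1..n. norm x0)" by (intro sum_mono norm_bounded)
      also have "\<dots> = real n * norm x0" by simp
      finally have s1: "cmod (\<Sum>j=1..n. apply_bcontfun x0 (k' - int j)) \<le> real n * norm x0" .
      have "cmod ((1 / of_nat n) * (\<Sum>j=1..n. apply_bcontfun x0 (k' - int j))) =
          cmod (\<Sum>j=1..n. apply_bcontfun x0 (k' - int j)) / real n"
        by (simp add: norm_mult norm_divide)
      also have "\<dots> \<le> norm x0" using s1 n0 by (simp add: divide_le_eq mult.commute)
      finally have "cmod ((1 / of_nat n) * (\<Sum>j=1..n. apply_bcontfun x0 (k' - int j))) \<le> norm x0" .
      then show ?thesis unfolding a_def M_def
        using norm_triangle_ineq4[of "(1 / of_nat n) * (\<Sum>j=1..n. apply_bcontfun x0 (k' - int j))" c] by linarith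
    qed
    have bdd: "bdd_above (range a)" using abnd by (intro bdd_aboveI) auto
    have "a k \<le> (SUP k'. a k')" by (rule cSUP_upper[OF _ bdd]) simp
    also have "\<dots> \<le> norm (SUP k'. a k')" by simp
    also have "\<dots> \<le> C * norm (1 / real n)" using N[OF n0(2)] unfolding a_def by simp
    also have "\<dots> = C / real n" by simp
    finally have ak: "a k \<le> C / real n" .
    have "(\<Sum>j=1..n. (apply_bcontfun x0 (k - int j) - c)) = of_nat n * ((1 / of_nat n) * (\<Sum>j=1..n. apply_bcontfun x0 (k - int j)) - c)"
      using n0 by (simp add: sum_subtractf algebra_simps)
    then have "cmod (\<Sum>j=1..n. (apply_bcontfun x0 (k - int j) - c)) = real n * a k"
      unfolding a_def by (simp add: norm_mult)
    also have "\<dots> \<le> real n * (C / real n)" using ak by (intro mult_left_mono) simp_all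
    also have "\<dots> = C" using n0 by simp
    moreover have "0 \<le> real (Suc N) * M" using M0 by simp
    ultimately show ?thesis by linarith
  qed
  then show ?thesis by (rule that)
qed


lemma point_est:
  fixes x0 :: linf and c :: complex
  assumes t: "t > 0" and B: "\<And>n. cmod (\<Sum>j=1..n. (apply_bcontfun x0 (k - int j) - c)) \<le> B"
  shows "cmod (apply_bcontfun (rsol t x0) k - c) \<le> exp (-t) * (norm x0 + cmod c) + B / sqrt t"
proof -
  define p where "p = pois t"
  define X where "X = apply_bcontfun (rsol t x0) k"
  define d where "d m = apply_bcontfun x0 (k - int m) - c" for m
  define s where "s n = (\<Sum>j=1..n. d j)" for n
  have B0: "B \<ge> 0" using B[of 0] by simp
  have sB: "cmod (s n) \<le> B" for n unfolding s_def d_def by (rule B)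
  have s0: "s 0 = 0" by (simp add: s_def)
  have sSuc: "s (Suc m) = s m + d (Suc m)" for m by (simp add: s_def)
  have f0: "(\<lambda>m. complex_of_real (p m) * apply_bcontfun x0 (k - int m)) sums X"
    unfolding p_def X_def pois_def by (rule rsol_sums)
  have "(\<lambda>m. complex_of_real (p m)) sums complex_of_real 1"
    unfolding p_def by (rule sums_of_real[OF pois_sums1])
  then have f1: "(\<lambda>m. complex_of_real (p m) * c) sums c"
    using sums_mult2[of _ "complex_of_real 1" c] by simp
  have fd: "(\<lambda>m. complex_of_real (p m) * d m) sums (X - c)"
    using sums_diff[OF f0 f1] unfolding d_def by (simp add: right_diff_distrib)
  define R where "R = X - c - complex_of_real (p 0) * d 0"
  have fS: "(\<lambda>m. complex_of_real (p (Suc m)) * d (Suc m)) sums R"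
    unfolding R_def using fd by (subst sums_Suc_iff) simp
  define H where "H m = complex_of_real (p m) * s m" for m
  have psum: "summable p" unfolding p_def using pois_sums1 by (rule sums_summable)
  have p0: "p m \<ge> 0" for m unfolding p_def using t by (simp add: pois_nonneg)
  have Hs: "summable H"
  proof (rule summable_comparison_test')
    show "summable (\<lambda>m. B * p m)" by (rule summable_mult[OF psum])
    fix m :: nat
    have "norm (H m) = p m * cmod (s m)" unfolding H_def using p0[of m] by (simp add: norm_mult)
    also have "\<dots> \<le> p m * B" using sB[of m] p0[of m] by (intro mult_left_mono)
    finally show "norm (H m) \<le> B * p m" by (simp add: mult.commute)
  qed
  define \<sigma> where "\<sigma> = suminf H"
  have "(\<lambda>m. H (Suc m)) sums (\<sigma> - H 0)"
    using summable_sums[OF Hs] unfolding \<sigma>_def by (subst sums_Suc_iff) simp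
  then have hS: "(\<lambda>m. H (Suc m)) sums \<sigma>" by (simp add: H_def s0)
  define K where "K m = complex_of_real (p (Suc m)) * s m" for m
  have HK: "H (Suc m) - complex_of_real (p (Suc m)) * d (Suc m) = K m" for m
    unfolding H_def K_def sSuc by (simp add: algebra_simps)
  have Ks: "K sums (\<sigma> - R)"
    using sums_diff[OF hS fS] unfolding HK .
  define G where "G m = complex_of_real (p m - p (Suc m)) * s m" for m
  have GHK: "H m - K m = G m" for m unfolding G_def H_def K_def by (simp add: algebra_simps)
  have Gs: "G sums R"
    using sums_diff[OF summable_sums[OF Hs] Ks] unfolding GHK \<sigma>_def by simp
  have tv: "summable (\<lambda>m. \<bar>p m - p (Suc m)\<bar>)" "(\<Sum>m. \<bar>p m - p (Suc m)\<bar>) \<le> 1 / sqrt t"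
    unfolding p_def using pois_tv[OF t] by auto
  have nG: "norm (G m) \<le> B * \<bar>p m - p (Suc m)\<bar>" for m
  proof -
    have "norm (G m) = \<bar>p m - p (Suc m)\<bar> * cmod (s m)" unfolding G_def by (simp only: norm_mult norm_of_real)
    also have "\<dots> \<le> \<bar>p m - p (Suc m)\<bar> * B" using sB[of m] by (intro mult_left_mono) simp_all
    finally show ?thesis by (simp add: mult.commute)
  qed
  have nGs: "summable (\<lambda>m. norm (G m))"
    by (rule summable_comparison_test'[OF summable_mult[OF tv(1), of B]]) (simp add: nG)
  have "cmod R = norm (suminf G)" using Gs by (simp add: sums_iff)
  also have "\<dots> \<le> (\<Sum>m. norm (G m))" by (rule summable_norm[OF nGs])
  also have "\<dots> \<le> (\<Sum>m. B * \<bar>p m - p (Suc m)\<bar>)"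
    by (intro suminf_le nG nGs summable_mult tv(1))
  also have "\<dots> = B * (\<Sum>m. \<bar>p m - p (Suc m)\<bar>)" by (rule suminf_mult[OF tv(1)])
  also have "\<dots> \<le> B * (1 / sqrt t)" by (intro mult_left_mono tv(2) B0)
  finally have Rb: "cmod R \<le> B / sqrt t" by simp
  have pz: "p 0 = exp (-t)" by (simp add: p_def pois_def)
  have "cmod (complex_of_real (p 0) * d 0) = exp (-t) * cmod (d 0)" by (simp add: pz norm_mult)
  also have "\<dots> \<le> exp (-t) * (norm x0 + cmod c)"
    unfolding d_def using norm_triangle_ineq4[of "apply_bcontfun x0 k" c] norm_bounded[of x0 k]
    by (intro mult_left_mono) simp_all
  finally have db: "cmod (complex_of_real (p 0) * d 0) \<le> exp (-t) * (norm x0 + cmod c)" .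
  have "X - c = R + complex_of_real (p 0) * d 0" by (simp add: R_def)
  then have "cmod (X - c) \<le> cmod R + cmod (complex_of_real (p 0) * d 0)" by (simp add: norm_triangle_ineq)
  then show ?thesis using Rb db unfolding X_def by linarith
qed


lemma exp_sqrt_bound:
  assumes t: "t \<ge> (1::real)"
  shows "exp (-t) \<le> 1 / sqrt t"
proof -
  have st: "sqrt t > 0" using t by simp
  have "sqrt t \<le> sqrt t * sqrt t" using mult_left_mono[OF real_sqrt_ge_one[OF t], of "sqrt t"] st by simp
  also have "\<dots> = t" using t by simp
  also have "\<dots> \<le> 1 + t" by simp
  also have "\<dots> \<le> exp t" by (rule exp_ge_add_one_self)
  finally have "sqrt t \<le> exp t" .
  then have "1 / exp t \<le> 1 / sqrt t" using st by (intro divide_left_mono) simp_all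
  then show ?thesis by (simp add: exp_minus divide_inverse)
qed

theorem theorem2:
  fixes x0 :: linf and c :: complex
  assumes "good x0"
    and "(\<lambda>n::nat. SUP k. cmod ((1 / of_nat n) * (\<Sum>j=1..n. apply_bcontfun x0 (k - int j)) - c))
           \<in> O(\<lambda>n. 1 / real n)"
  shows "(\<lambda>t::real. SUP k. cmod (apply_bcontfun (rsol t x0) k - c)) \<in> O[at_top](\<lambda>t. t powr (-1/2))"
proof -
  obtain B where B: "\<And>k n. cmod (\<Sum>j=1..n. (apply_bcontfun x0 (k - int j) - c)) \<le> B"
    using psum_bound[OF assms(2)] by blast
  have B0: "B \<ge> 0" using B[of 0 0] by simp
  define M where "M = norm x0 + cmod c"
  have M0: "M \<ge> 0" by (simp add: M_def)
  define K where "K = M + B + 1"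
  have K0: "K > 0" using B0 M0 by (simp add: K_def)
  show ?thesis
  proof (rule landau_o.bigI[OF K0])
    show "eventually (\<lambda>t. norm (SUP k. cmod (apply_bcontfun (rsol t x0) k - c)) \<le> K * norm (t powr (-1/2))) at_top"
      using eventually_ge_at_top[of "1::real"]
    proof eventually_elim
      case (elim t)
      have t0: "t > 0" using elim by simp
      have st: "sqrt t > 0" using t0 by simp
      have pw: "t powr (-1/2) = 1 / sqrt t"
        using t0 by (simp add: powr_minus_divide powr_half_sqrt[symmetric])
      have ek: "cmod (apply_bcontfun (rsol t x0) k - c) \<le> (M + B) / sqrt t" for k
      proof -
        have "cmod (apply_bcontfun (rsol t x0) k - c) \<le> exp (-t) * M + B / sqrt t"
          using point_est[OF t0 B] unfolding M_def .
        also have "\<dots> \<le> (1 / sqrt t) * M + B / sqrt t"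
          using exp_sqrt_bound[OF elim] M0 by (intro add_right_mono mult_right_mono) simp_all
        also have "\<dots> = (M + B) / sqrt t" by (simp add: add_divide_distrib)
        finally show ?thesis .
      qed
      have bdd: "bdd_above (range (\<lambda>k. cmod (apply_bcontfun (rsol t x0) k - c)))"
        using ek by (intro bdd_aboveI) auto
      have S0: "0 \<le> (SUP k. cmod (apply_bcontfun (rsol t x0) k - c))"
        using cSUP_upper[OF _ bdd, of 0] by (meson UNIV_I norm_ge_zero order_trans)
      have "(SUP k. cmod (apply_bcontfun (rsol t x0) k - c)) \<le> (M + B) / sqrt t"
        using ek by (intro cSUP_least) auto
      also have "\<dots> \<le> K / sqrt t" using st by (intro divide_right_mono) (simp_all add: K_def)
      finally show ?case using S0 t0 pw by simp
    qed
  qed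
qed

end
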